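(* Fix $\theta,\gamma>0$ and $\beta>0$, and consider the modified GFI process described in the context. Then it is supercritical ($\overline\lambda>0$) when $\gamma>\theta$, critical ($\overline\lambda=0$) when $\gamma=\theta$, and subcritical ($\overline\lambda<0$) when $\gamma<\theta$.
   Context: The modified GFI process with parameters $(\beta,\theta,\gamma)$ has the same growth (each active vertex attaches a new active vertex by an open edge at rate $\beta$) and fragmentation (each open edge closes at rate $\gamma$) as the GFI process, but detection is attached to edges: each open edge of an active cluster independently triggers, at rate $\theta$, the isolation (inactivation) of its whole cluster (maximal set of vertices connected by open edges). In terms of sizes, an active cluster of size $n$ grows to size $n+1$ at rate $\beta n$, is isolated at rate $\theta(n-1)$, and splits into clusters of sizes $n-j$ and $j$ at rate $\gamma n/(j(j+1))$, $1\le j\le n-1$. The generator of its first moment semigroup is $\overline{\mathcal{L}}f(n)=\beta n(f(n+1)-f(n))-\theta(n-1)f(n)+\sum_{j=1}^{n-1}\frac{\gamma n}{j(j+1)}(f(j)+f(n-j)-f(n))$, and $\overline\lambda=\overline\lambda(\beta,\theta,\gamma)$ denotes its Perron root (Malthusian exponent), i.e. the real number for which there exist a positive function $\overline h$ bounded above and below by positive constants and a positive probability vector $\overline\pi$ with $\overline{\mathcal{L}}\overline h=\overline\lambda\,\overline h$ and $\overline\pi e^{t\overline{\mathcal L}}=e^{\overline\lambda t}\overline\pi$. *)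

theory Defs
  imports "HOL-Analysis.Analysis"
begin

text \<open>State space: cluster sizes n \<ge> 1 (values of functions at 0 are irrelevant).\<close>

definition mgfi_gen :: "real \<Rightarrow> real \<Rightarrow> real \<Rightarrow> (nat \<Rightarrow> real) \<Rightarrow> nat \<Rightarrow> real" where
  "mgfi_gen \<beta> \<theta> \<gamma> f n =
     \<beta> * real n * (f (n + 1) - f n) - \<theta> * (real n - 1) * f n
     + (\<Sum>j = 1..n - 1. \<gamma> * real n / (real j * (real j + 1)) * (f j + f (n - j) - f n))"

definition mgfi_kernel :: "real \<Rightarrow> real \<Rightarrow> real \<Rightarrow> nat \<Rightarrow> nat \<Rightarrow> real" where
  "mgfi_kernel \<beta> \<theta> \<gamma> n m = mgfi_gen \<beta> \<theta> \<gamma> (\<lambda>k. if k = m then 1 else 0) n"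

fun mgfi_trunc_pow :: "real \<Rightarrow> real \<Rightarrow> real \<Rightarrow> nat \<Rightarrow> nat \<Rightarrow> nat \<Rightarrow> nat \<Rightarrow> real" where
  "mgfi_trunc_pow \<beta> \<theta> \<gamma> N 0 n m = (if n = m then 1 else 0)"
| "mgfi_trunc_pow \<beta> \<theta> \<gamma> N (Suc k) n m =
     (\<Sum>l = 1..N. mgfi_trunc_pow \<beta> \<theta> \<gamma> N k n l * mgfi_kernel \<beta> \<theta> \<gamma> l m)"

definition mgfi_trunc_exp :: "real \<Rightarrow> real \<Rightarrow> real \<Rightarrow> nat \<Rightarrow> real \<Rightarrow> nat \<Rightarrow> nat \<Rightarrow> real" where
  "mgfi_trunc_exp \<beta> \<theta> \<gamma> N t n m =
     (\<Sum>k. t ^ k / fact k * mgfi_trunc_pow \<beta> \<theta> \<gamma> N k n m)"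

text \<open>First moment semigroup e^{tL}: the minimal semigroup generated by L, obtained as
  the (monotone) limit of the truncated semigroups as N \<rightarrow> \<infinity>.\<close>
definition mgfi_semigroup :: "real \<Rightarrow> real \<Rightarrow> real \<Rightarrow> real \<Rightarrow> nat \<Rightarrow> nat \<Rightarrow> real" where
  "mgfi_semigroup \<beta> \<theta> \<gamma> t n m = lim (\<lambda>N. mgfi_trunc_exp \<beta> \<theta> \<gamma> N t n m)"

definition is_perron_root :: "real \<Rightarrow> real \<Rightarrow> real \<Rightarrow> real \<Rightarrow> bool" where
  "is_perron_root \<beta> \<theta> \<gamma> lam \<longleftrightarrow>
     (\<exists>h :: nat \<Rightarrow> real. (\<exists>c C. 0 < c \<and> (\<forall>n\<ge>1. c \<le> h n \<and> h n \<le> C))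
        \<and> (\<forall>n\<ge>1. mgfi_gen \<beta> \<theta> \<gamma> h n = lam * h n))
   \<and> (\<exists>\<pi> :: nat \<Rightarrow> real. (\<forall>n\<ge>1. 0 < \<pi> n) \<and> (\<pi> has_sum 1) {1..}
        \<and> (\<forall>t\<ge>0. \<forall>m\<ge>1.
              ((\<lambda>n. \<pi> n * mgfi_semigroup \<beta> \<theta> \<gamma> t n m) has_sum (exp (lam * t) * \<pi> m)) {1..}))"

end

theory Submission
  imports Defs
begin

definition Aop :: "real \<Rightarrow> real \<Rightarrow> (nat \<Rightarrow> real) \<Rightarrow> nat \<Rightarrow> real" where
  "Aop b g h n = b * real n * (h (n + 1) - h n)
     + (\<Sum>j = 1..n - 1. g * real n / (real j * (real j + 1)) * (h j + h (n - j) - 2 * h n))"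

lemma harm_sum0:
  "(\<Sum>j = 1..k. 1 / (real j * (real j + 1))) = 1 - 1 / real (Suc k)"
proof (induction k)
  case 0
  then show ?case by simp
next
  case (Suc k)
  have "(\<Sum>j = 1..Suc k. 1 / (real j * (real j + 1)))
     = (\<Sum>j = 1..k. 1 / (real j * (real j + 1))) + 1 / (real (Suc k) * (real (Suc k) + 1))"
    by simp
  also have "\<dots> = 1 - 1 / real (Suc k) + 1 / (real (Suc k) * (real (Suc k) + 1))"
    using Suc.IH by simp
  also have "\<dots> = 1 - 1 / real (Suc (Suc k))"
  proof -
    have a: "real (Suc k) > 0" "real (Suc k) + 1 > 0" "real (Suc (Suc k)) = real (Suc k) + 1" by auto
    have gen: "\<And>x::real. x > 0 \<Longrightarrow> 1 - 1 / x + 1 / (x * (x + 1)) = 1 - 1 / (x + 1)"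
    proof -
      fix x :: real assume x: "x > 0"
      have "x * (x + 1) > 0" using x by simp
      then show "1 - 1 / x + 1 / (x * (x + 1)) = 1 - 1 / (x + 1)" using x
        by (simp add: field_simps)
    qed
    show ?thesis unfolding a(3) using gen[OF a(1)] by simp
  qed
  finally show ?case .
qed

lemma harm_sum:
  assumes "n \<ge> 1"
  shows "(\<Sum>j = 1..n - 1. 1 / (real j * (real j + 1))) = 1 - 1 / real n"
  using harm_sum0[of "n - 1"] assms by simp

lemma decomp:
  assumes "n \<ge> 1"
  shows "mgfi_gen b th g h n = Aop b g h n + (g - th) * (real n - 1) * h n"
proof -
  have "(\<Sum>j = 1..n - 1. g * real n / (real j * (real j + 1)) * (h j + h (n - j) - h n))
     = (\<Sum>j = 1..n - 1. g * real n / (real j * (real j + 1)) * (h j + h (n - j) - 2 * h n))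
       + g * real n * h n * (\<Sum>j = 1..n - 1. 1 / (real j * (real j + 1)))"
  proof -
    have "\<And>j. g * real n / (real j * (real j + 1)) * (h j + h (n - j) - h n)
      = g * real n / (real j * (real j + 1)) * (h j + h (n - j) - 2 * h n)
        + g * real n * h n * (1 / (real j * (real j + 1)))"
      by (simp add: divide_inverse algebra_simps)
    then show ?thesis by (simp add: sum.distrib sum_distrib_left)
  qed
  also have "g * real n * h n * (\<Sum>j = 1..n - 1. 1 / (real j * (real j + 1))) = g * (real n - 1) * h n"
  proof -
    have "g * real n * h n * (\<Sum>j = 1..n - 1. 1 / (real j * (real j + 1)))
        = g * real n * h n * (1 - 1 / real n)" by (simp only: harm_sum[OF assms])
    also have "\<dots> = g * (real n - 1) * h n" using assms by (simp add: field_simps)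
    finally show ?thesis .
  qed
  finally show ?thesis unfolding mgfi_gen_def Aop_def by (simp add: algebra_simps)
qed

lemma minp:
  fixes b g c :: real and h :: "nat \<Rightarrow> real"
  assumes b: "b > 0" and g: "g > 0"
    and lb: "\<And>n. n \<ge> 1 \<Longrightarrow> c \<le> h n"
    and A: "\<And>n. n \<ge> 1 \<Longrightarrow> Aop b g h n \<le> 0"
    and k: "k \<ge> 1"
  shows "h 1 \<le> h k"
proof (rule ccontr)
  assume "\<not> h 1 \<le> h k"
  then have hk: "h k < h 1" by simp
  define S where "S = h ` {1..}"
  define m where "m = Inf S"
  have bdd: "bdd_below S" unfolding S_def using lb by (auto intro: bdd_belowI[of _ c])
  have ne: "S \<noteq> {}" unfolding S_def by auto
  have mle: "\<And>n. n \<ge> 1 \<Longrightarrow> m \<le> h n"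
    unfolding m_def S_def using bdd by (auto simp: S_def intro!: cInf_lower)
  have "m \<le> h k" using mle k .
  define d where "d = h 1 - m"
  have d: "d > 0" using hk \<open>m \<le> h k\<close> unfolding d_def by simp
  define e where "e = min (d / 8) (g * d / (8 * b))"
  have e: "e > 0" using d b g unfolding e_def by simp
  have e1: "e \<le> d / 8" and e2: "e \<le> g * d / (8 * b)" unfolding e_def by auto
  have "Inf S < m + e" using e unfolding m_def by simp
  then obtain y where "y \<in> S" "y < m + e" using cInf_less_iff[OF ne bdd] by auto
  then obtain n where n1: "n \<ge> 1" and hn: "h n < m + e" unfolding S_def by auto
  have n2: "n \<ge> 2"
  proof (rule ccontr)
    assume "\<not> n \<ge> 2"
    then have "n = 1" using n1 by simp
    then show False using hn e1 d unfolding d_def by simp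
  qed
  define w where "w = (\<lambda>j::nat. g * real n / (real j * (real j + 1)))"
  have w0: "\<And>j. w j \<ge> 0" unfolding w_def using g by simp
  have tj: "\<And>j. j \<in> {1..n - 1} \<Longrightarrow>
      w j * (h j + h (n - j) - 2 * h n) \<ge> w j * (-2 * e) + (if j = 1 then w j * d else 0)"
  proof -
    fix j assume j: "j \<in> {1..n - 1}"
    have "h j \<ge> m" "h (n - j) \<ge> m" using j by (auto intro!: mle)
    then have t: "h j + h (n - j) - 2 * h n \<ge> -2 * e + (if j = 1 then d else 0)"
      using hn unfolding d_def by auto
    have "w j * (h j + h (n - j) - 2 * h n) \<ge> w j * (-2 * e + (if j = 1 then d else 0))"
      using mult_left_mono[OF t w0] by simp
    then show "w j * (h j + h (n - j) - 2 * h n) \<ge> w j * (-2 * e) + (if j = 1 then w j * d else 0)"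
      by (simp add: algebra_simps split: if_splits)
  qed
  have "(\<Sum>j = 1..n - 1. w j * (h j + h (n - j) - 2 * h n))
      \<ge> (\<Sum>j = 1..n - 1. w j * (-2 * e) + (if j = 1 then w j * d else 0))"
    by (rule sum_mono) (rule tj)
  also have "(\<Sum>j = 1..n - 1. w j * (-2 * e) + (if j = 1 then w j * d else 0))
      = -2 * e * (g * real n) * (\<Sum>j = 1..n - 1. 1 / (real j * (real j + 1))) + w 1 * d"
  proof -
    have "1 \<in> {1..n - 1}" using n2 by simp
    then have "(\<Sum>j = 1..n - 1. (if j = 1 then w j * d else 0)) = w 1 * d"
      by (simp add: sum.delta)
    moreover have "(\<Sum>j = 1..n - 1. w j * (-2 * e)) = -2 * e * (g * real n) * (\<Sum>j = 1..n - 1. 1 / (real j * (real j + 1)))"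
      unfolding w_def by (simp add: sum_distrib_left mult_ac)
    moreover have "(\<Sum>j = 1..n - 1. w j * (-2 * e) + (if j = 1 then w j * d else 0))
       = (\<Sum>j = 1..n - 1. w j * (-2 * e)) + (\<Sum>j = 1..n - 1. (if j = 1 then w j * d else 0))"
      by (rule sum.distrib)
    ultimately show ?thesis by simp
  qed
  also have "\<dots> = -2 * e * (g * real n) * (1 - 1 / real n) + g * real n * d / 2"
    using n1 by (simp only: harm_sum[OF n1]) (simp add: w_def)
  also have "\<dots> \<ge> -2 * e * (g * real n) + g * real n * d / 2"
  proof -
    have i1: "(1 - 1 / real n) \<le> 1" by simp
    have i2: "2 * e * (g * real n) \<ge> 0" using e g by simp
    have "2 * e * (g * real n) * (1 - 1 / real n) \<le> 2 * e * (g * real n) * 1"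
      by (rule mult_left_mono[OF i1 i2])
    then show ?thesis by simp
  qed
  finally have sumge: "(\<Sum>j = 1..n - 1. w j * (h j + h (n - j) - 2 * h n)) \<ge> g * real n * (d / 2 - 2 * e)"
    by (simp add: algebra_simps)
  have "Aop b g h n \<le> 0" using A n1 .
  then have "b * real n * (h (n + 1) - h n) \<le> - g * real n * (d / 2 - 2 * e)"
    using sumge unfolding Aop_def w_def by simp
  then have "real n * (b * (h (n + 1) - h n)) \<le> real n * (- g * (d / 2 - 2 * e))"
    by (simp add: algebra_simps)
  then have "b * (h (n + 1) - h n) \<le> - g * (d / 2 - 2 * e)"
    by (rule mult_left_le_imp_le) (use n1 in simp)
  also have "\<dots> \<le> - g * (d / 4)" using e1 g by simp
  finally have "b * (h (n + 1) - h n) \<le> - g * d / 4" by simp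
  then have "h (n + 1) - h n \<le> - g * d / (4 * b)" using b by (simp add: field_simps)
  moreover have "e < g * d / (4 * b)"
  proof -
    have "b * e > 0" using b e by simp
    then show ?thesis using e2 g d b by (simp add: field_simps)
  qed
  ultimately have "h (n + 1) < m" using hn by simp
  moreover have "h (n + 1) \<ge> m" by (rule mle) simp
  ultimately show False by simp
qed

lemma Aop_neg: "Aop b g (\<lambda>n. - h n) n = - Aop b g h n"
proof -
  have "(\<Sum>j = 1..n - 1. g * real n / (real j * (real j + 1)) * (- h j + - h (n - j) - 2 * - h n))
     = (\<Sum>j = 1..n - 1. - (g * real n / (real j * (real j + 1)) * (h j + h (n - j) - 2 * h n)))"
    by (rule sum.cong) (simp_all add: algebra_simps)
  also have "\<dots> = - (\<Sum>j = 1..n - 1. g * real n / (real j * (real j + 1)) * (h j + h (n - j) - 2 * h n))"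
    by (rule sum_negf)
  finally show ?thesis unfolding Aop_def by (simp add: algebra_simps)
qed

lemma maxp:
  fixes b g C :: real and h :: "nat \<Rightarrow> real"
  assumes b: "b > 0" and g: "g > 0"
    and ub: "\<And>n. n \<ge> 1 \<Longrightarrow> h n \<le> C"
    and A: "\<And>n. n \<ge> 1 \<Longrightarrow> Aop b g h n \<ge> 0"
    and k: "k \<ge> 1"
  shows "h k \<le> h 1"
proof -
  have "(\<lambda>n. - h n) 1 \<le> (\<lambda>n. - h n) k"
    by (rule minp[OF b g, of "- C"]) (use ub A k Aop_neg in auto)
  then show ?thesis by simp
qed

lemma gen1: "mgfi_gen b th g h 1 = b * (h 2 - h 1)"
  unfolding mgfi_gen_def by (simp add: numeral_2_eq_2)

lemma gen2: "mgfi_gen b th g h 2 = 2 * b * (h 3 - h 2) - th * h 2 + g * (h 1 + h 1 - h 2)"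
proof -
  have "{1..(2::nat) - 1} = {1}" by auto
  then show ?thesis unfolding mgfi_gen_def by (simp add: numeral_3_eq_3 numeral_2_eq_2)
qed

theorem lemma6p7:
  fixes \<beta> \<theta> \<gamma> lam :: real
  assumes "\<beta> > 0" "\<theta> > 0" "\<gamma> > 0"
    and "is_perron_root \<beta> \<theta> \<gamma> lam"
  shows "(\<gamma> > \<theta> \<longrightarrow> lam > 0) \<and> (\<gamma> = \<theta> \<longrightarrow> lam = 0) \<and> (\<gamma> < \<theta> \<longrightarrow> lam < 0)"
proof -
  note b = assms(1) and th = assms(2) and g = assms(3)
  obtain h c C where c: "0 < c" and hb: "\<And>n. n \<ge> 1 \<Longrightarrow> c \<le> h n \<and> h n \<le> C"
    and eig: "\<And>n. n \<ge> 1 \<Longrightarrow> mgfi_gen \<beta> \<theta> \<gamma> h n = lam * h n"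
    using assms(4) unfolding is_perron_root_def by blast
  have lb: "\<And>n. n \<ge> 1 \<Longrightarrow> c \<le> h n" and ub: "\<And>n. n \<ge> 1 \<Longrightarrow> h n \<le> C" using hb by auto
  have hpos: "\<And>n. n \<ge> 1 \<Longrightarrow> h n > 0" using lb c by (meson less_le_trans)
  have Aeq: "\<And>n. n \<ge> 1 \<Longrightarrow> Aop \<beta> \<gamma> h n = lam * h n - (\<gamma> - \<theta>) * (real n - 1) * h n"
    using eig decomp by (metis add_diff_cancel_right')
  have e1: "\<beta> * (h 2 - h 1) = lam * h 1" using eig[of 1] gen1 by simp
  have e2: "2 * \<beta> * (h 3 - h 2) - \<theta> * h 2 + \<gamma> * (h 1 + h 1 - h 2) = lam * h 2"
    using eig[of 2] gen2 by simp
  have h1: "h 1 > 0" "h 2 > 0" using hpos by auto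
  have c1: "lam > 0" if gt: "\<gamma> > \<theta>"
  proof (rule ccontr)
    assume "\<not> lam > 0"
    then have l: "lam \<le> 0" by simp
    have An: "Aop \<beta> \<gamma> h n \<le> 0" if n: "n \<ge> 1" for n
    proof -
      have "lam * h n \<le> 0" using l hpos[OF n] by (simp add: mult_nonpos_nonneg)
      moreover have "(\<gamma> - \<theta>) * (real n - 1) * h n \<ge> 0" using gt n hpos[OF n] by simp
      ultimately show ?thesis using Aeq[OF n] by simp
    qed
    have m: "\<And>k. k \<ge> 1 \<Longrightarrow> h 1 \<le> h k" by (rule minp[OF b g lb An]) auto
    have "h 2 \<ge> h 1" "h 3 \<ge> h 1" using m by auto
    moreover have "lam * h 1 \<le> 0" using l h1 by (simp add: mult_nonpos_nonneg)
    then have "\<beta> * (h 2 - h 1) \<le> 0" using e1 by simp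
    then have "h 2 - h 1 \<le> 0" using b by (simp add: mult_le_0_iff)
    ultimately have "h 2 = h 1" by simp
    then have "lam * h 1 = 0" using e1 by simp
    then have "lam = 0" using h1 by simp
    then have "2 * \<beta> * (h 3 - h 2) + (\<gamma> - \<theta>) * h 2 = 0" using e2 \<open>h 2 = h 1\<close>
      by (simp add: algebra_simps)
    moreover have "2 * \<beta> * (h 3 - h 2) \<ge> 0" using \<open>h 3 \<ge> h 1\<close> \<open>h 2 = h 1\<close> b by simp
    moreover have "(\<gamma> - \<theta>) * h 2 > 0" using gt h1 by simp
    ultimately show False by simp
  qed
  have c3: "lam < 0" if lt: "\<gamma> < \<theta>"
  proof (rule ccontr)
    assume "\<not> lam < 0"
    then have l: "lam \<ge> 0" by simp
    have An: "Aop \<beta> \<gamma> h n \<ge> 0" if n: "n \<ge> 1" for n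
    proof -
      have "lam * h n \<ge> 0" using l hpos[OF n] by simp
      moreover have "(\<gamma> - \<theta>) * (real n - 1) * h n \<le> 0"
      proof -
        have "(\<theta> - \<gamma>) * (real n - 1) * h n \<ge> 0" using lt n hpos[OF n] by simp
        then show ?thesis by (simp add: algebra_simps)
      qed
      ultimately show ?thesis using Aeq[OF n] by simp
    qed
    have m: "\<And>k. k \<ge> 1 \<Longrightarrow> h k \<le> h 1" by (rule maxp[OF b g ub An]) auto
    have "h 2 \<le> h 1" "h 3 \<le> h 1" using m by auto
    moreover have "lam * h 1 \<ge> 0" using l h1 by simp
    then have "\<beta> * (h 2 - h 1) \<ge> 0" using e1 by simp
    then have "h 2 - h 1 \<ge> 0" using b by (simp add: zero_le_mult_iff)
    ultimately have "h 2 = h 1" by simp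
    then have "lam * h 1 = 0" using e1 by simp
    then have "lam = 0" using h1 by simp
    then have "2 * \<beta> * (h 3 - h 2) + (\<gamma> - \<theta>) * h 2 = 0" using e2 \<open>h 2 = h 1\<close>
      by (simp add: algebra_simps)
    moreover have "2 * \<beta> * (h 3 - h 2) \<le> 0" using \<open>h 3 \<le> h 1\<close> \<open>h 2 = h 1\<close> b
      by (simp add: mult_nonneg_nonpos)
    moreover have "(\<theta> - \<gamma>) * h 2 > 0" using lt h1 by simp
    ultimately show False by (simp add: algebra_simps)
  qed
  have c2: "lam = 0" if eq: "\<gamma> = \<theta>"
  proof -
    have Aeq': "\<And>n. n \<ge> 1 \<Longrightarrow> Aop \<beta> \<gamma> h n = lam * h n" using Aeq eq by simp
    have "\<not> lam < 0"
    proof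
      assume l: "lam < 0"
      have An: "Aop \<beta> \<gamma> h n \<le> 0" if n: "n \<ge> 1" for n
        using Aeq'[OF n] l hpos[OF n] by (simp add: mult_nonpos_nonneg)
      have "h 1 \<le> h 2" by (rule minp[OF b g lb An]) auto
      moreover have "lam * h 1 < 0" using l h1 by (simp add: mult_neg_pos)
      moreover have "\<beta> * (h 2 - h 1) \<ge> 0" using calculation(1) b by simp
      ultimately show False using e1 by simp
    qed
    moreover have "\<not> lam > 0"
    proof
      assume l: "lam > 0"
      have An: "Aop \<beta> \<gamma> h n \<ge> 0" if n: "n \<ge> 1" for n
        using Aeq'[OF n] l hpos[OF n] by simp
      have "h 2 \<le> h 1" by (rule maxp[OF b g ub An]) auto
      moreover have "lam * h 1 > 0" using l h1 by simp
      moreover have "\<beta> * (h 2 - h 1) \<le> 0" using calculation(1) b by (simp add: mult_le_0_iff)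
      ultimately show False using e1 by simp
    qed
    ultimately show ?thesis by simp
  qed
  show ?thesis using c1 c2 c3 by blast
qed

end
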